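(* Let $d\ge1$. Let $G_A=(V_A,E_A)$ with configuration $\mathbf{p}^A$ and $G_B=(V_B,E_B)$ with configuration $\mathbf{p}^B$ be frameworks in general position in $\mathbb{R}^d$, with $V_C=V_A\cap V_B$ a proper subset of both $V_A$ and $V_B$, $n=|V_C|\ge d+1$, and $\mathbf{p}^A_i=\mathbf{p}^B_i$ for $i\in V_C$. Let $\Omega_A$ (indexed by $V_A$) and $\Omega_B$ (indexed by $V_B$) be positive semidefinite stress matrices of nullity $d+1$ of $G_A(\mathbf{p}^A)$ and $G_B(\mathbf{p}^B)$ respectively. Let $V=V_A\cup V_B$ and let $\widetilde\Omega_A$, $\widetilde\Omega_B$ be the $V\times V$ matrices obtained by extending $\Omega_A$, $\Omega_B$ by zeros, i.e. $(\widetilde\Omega_A)_{ij}=(\Omega_A)_{ij}$ if $i,j\in V_A$ and $0$ otherwise, and similarly for $B$. Then $\widetilde\Omega=\widetilde\Omega_A+\widetilde\Omega_B$ is a positive semidefinite stress matrix of nullity $d+1$ of the framework attachment, i.e. of the framework with graph $(V,E_A\cup E_B)$ and configuration $\mathbf{p}$ where $\mathbf{p}_i=\mathbf{p}^A_i$ for $i\in V_A$, $\mathbf{p}_i=\mathbf{p}^B_i$ for $i\in V_B$.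
   Context: A framework $G(\mathbf{p})$ in $\mathbb{R}^d$ is a finite graph $G=(V,E)$ with points $\mathbf{p}_i\in\mathbb{R}^d$; it is in general position if any $d+1$ distinct vertices have affinely independent points. A stress matrix of $G(\mathbf{p})$ is a real $|V|\times|V|$ matrix $\Omega$ with: $\Omega_{ij}=\Omega_{ji}$; $\Omega_{ij}=0$ whenever $i\ne j$ and $\{i,j\}\notin E$; $\sum_{j}\Omega_{ij}=0$ for all $i$; $\sum_j\Omega_{ij}\mathbf{p}_j=0$ for all $i$. Its nullity is $\dim\ker\Omega$. *)

theory Defs
  imports "HOL-Analysis.Analysis"
begin

(* A "V x V matrix" is a function
   'v => 'v => real of which only the entries on V x V matter. *)

definition is_graph :: "'v set \<Rightarrow> 'v set set \<Rightarrow> bool" where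
  "is_graph V E \<longleftrightarrow> finite V \<and> (\<forall>e\<in>E. \<exists>i j. e = {i, j} \<and> i \<noteq> j \<and> i \<in> V \<and> j \<in> V)"

definition general_position :: "'v set \<Rightarrow> ('v \<Rightarrow> real^'d) \<Rightarrow> bool" where
  "general_position V p \<longleftrightarrow>
     (\<forall>S\<subseteq>V. card S = CARD('d) + 1 \<longrightarrow> inj_on p S \<and> \<not> affine_dependent (p ` S))"

definition is_stress_matrix ::
  "'v set \<Rightarrow> 'v set set \<Rightarrow> ('v \<Rightarrow> real^'d) \<Rightarrow> ('v \<Rightarrow> 'v \<Rightarrow> real) \<Rightarrow> bool" where
  "is_stress_matrix V E p \<Omega> \<longleftrightarrow>
     (\<forall>i\<in>V. \<forall>j\<in>V. \<Omega> i j = \<Omega> j i) \<and>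
     (\<forall>i\<in>V. \<forall>j\<in>V. i \<noteq> j \<and> {i, j} \<notin> E \<longrightarrow> \<Omega> i j = 0) \<and>
     (\<forall>i\<in>V. (\<Sum>j\<in>V. \<Omega> i j) = 0) \<and>
     (\<forall>i\<in>V. (\<Sum>j\<in>V. \<Omega> i j *\<^sub>R p j) = 0)"

definition psd_on :: "'v set \<Rightarrow> ('v \<Rightarrow> 'v \<Rightarrow> real) \<Rightarrow> bool" where
  "psd_on V \<Omega> \<longleftrightarrow> (\<forall>x :: 'v \<Rightarrow> real. 0 \<le> (\<Sum>i\<in>V. \<Sum>j\<in>V. x i * \<Omega> i j * x j))"

definition kernel_on :: "'v::finite set \<Rightarrow> ('v \<Rightarrow> 'v \<Rightarrow> real) \<Rightarrow> (real^'v) set" where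
  "kernel_on V \<Omega> = {x. (\<forall>i. i \<notin> V \<longrightarrow> x $ i = 0) \<and> (\<forall>i\<in>V. (\<Sum>j\<in>V. \<Omega> i j * x $ j) = 0)}"

definition nullity_on :: "'v::finite set \<Rightarrow> ('v \<Rightarrow> 'v \<Rightarrow> real) \<Rightarrow> nat" where
  "nullity_on V \<Omega> = dim (kernel_on V \<Omega>)"

definition extend_zero :: "'v set \<Rightarrow> ('v \<Rightarrow> 'v \<Rightarrow> real) \<Rightarrow> 'v \<Rightarrow> 'v \<Rightarrow> real" where
  "extend_zero W \<Omega> = (\<lambda>i j. if i \<in> W \<and> j \<in> W then \<Omega> i j else 0)"

end

theory Submission
  imports Defs
begin

definition affmap :: "'v set \<Rightarrow> ('v \<Rightarrow> real^'d) \<Rightarrow> ((real^'d) \<times> real) \<Rightarrow> real^'v" where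
  "affmap W p z = (\<chi> i. if i \<in> W then fst z \<bullet> p i + snd z else 0)"

lemma affmap_linear: "linear (affmap W p)"
  by (rule linearI) (auto simp: affmap_def vec_eq_iff inner_add_left algebra_simps)

lemma key_zero:
  fixes p :: "'v \<Rightarrow> real^'d"
  assumes "card S = CARD('d) + 1" "inj_on p S" "\<not> affine_dependent (p ` S)"
    and z: "\<forall>i\<in>S. a \<bullet> p i + c = 0"
  shows "a = 0 \<and> c = 0"
proof -
  have "card (p ` S) = CARD('d) + 1" using assms by (simp add: card_image)
  then have "aff_dim (p ` S) = int CARD('d)"
    using aff_dim_affine_independent[OF assms(3)] by simp
  then have full: "affine hull (p ` S) = UNIV"
    using aff_dim_eq_full[where S="p ` S"] by simp
  have "p ` S \<subseteq> {x. a \<bullet> x = - c}" using z by (auto simp: algebra_simps)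
  then have "affine hull (p ` S) \<subseteq> {x. a \<bullet> x = - c}"
    by (rule hull_minimal) (rule affine_hyperplane)
  then have all: "\<And>x. a \<bullet> x = - c" using full by auto
  have "c = 0" using all[of 0] by simp
  moreover have "a = 0" using all[of a] \<open>c = 0\<close> by simp
  ultimately show ?thesis by simp
qed

lemma dim_affmap:
  fixes p :: "'v::finite \<Rightarrow> real^'d"
  assumes "S \<subseteq> W" "card S = CARD('d) + 1" "inj_on p S" "\<not> affine_dependent (p ` S)"
  shows "dim (range (affmap W p)) = CARD('d) + 1"
proof -
  have "inj (affmap W p)"
    unfolding linear_injective_0[OF affmap_linear]
  proof (intro allI impI)
    fix z :: "(real^'d) \<times> real" assume "affmap W p z = 0"
    then have "\<forall>i\<in>S. fst z \<bullet> p i + snd z = 0" using assms(1)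
      by (auto simp: affmap_def vec_eq_iff split: if_splits)
    then show "z = 0" using key_zero[OF assms(2-4)] by (simp add: prod_eq_iff)
  qed
  then have "dim (affmap W p ` UNIV) = dim (UNIV :: ((real^'d) \<times> real) set)"
    by (intro dim_image_eq affmap_linear) (auto simp: inj_on_def inj_def)
  then show ?thesis by simp
qed


lemma psd_zero:
  fixes M :: "'v \<Rightarrow> 'v \<Rightarrow> real"
  assumes fin: "finite W" and sym: "\<forall>i\<in>W. \<forall>j\<in>W. M i j = M j i" and psd: "psd_on W M"
    and q: "(\<Sum>i\<in>W. \<Sum>j\<in>W. x i * M i j * x j) = 0"
  shows "\<forall>i\<in>W. (\<Sum>j\<in>W. M i j * x j) = 0"
proof -
  define y where "y i = (\<Sum>j\<in>W. M i j * x j)" for i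
  define B where "B = (\<Sum>i\<in>W. y i * y i)"
  define Q where "Q = (\<Sum>i\<in>W. \<Sum>j\<in>W. y i * M i j * y j)"
  have Q0: "Q \<ge> 0" using psd unfolding psd_on_def Q_def by blast
  have B1: "(\<Sum>i\<in>W. \<Sum>j\<in>W. y i * M i j * x j) = B"
    unfolding B_def y_def by (simp add: sum_distrib_left mult.assoc)
  have "(\<Sum>i\<in>W. \<Sum>j\<in>W. x i * M i j * y j) = (\<Sum>j\<in>W. \<Sum>i\<in>W. x i * M i j * y j)"
    by (rule sum.swap)
  also have "\<dots> = (\<Sum>j\<in>W. \<Sum>i\<in>W. y j * M j i * x i)"
    using sym by (intro sum.cong refl) (auto simp: mult.commute)
  finally have B2: "(\<Sum>i\<in>W. \<Sum>j\<in>W. x i * M i j * y j) = B" using B1 by simp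
  have exp: "(\<Sum>i\<in>W. \<Sum>j\<in>W. (x i + t * y i) * M i j * (x j + t * y j)) = 2 * t * B + t^2 * Q" for t
  proof -
    have "(\<Sum>i\<in>W. \<Sum>j\<in>W. (x i + t * y i) * M i j * (x j + t * y j)) =
       (\<Sum>i\<in>W. \<Sum>j\<in>W. x i * M i j * x j) + t * (\<Sum>i\<in>W. \<Sum>j\<in>W. x i * M i j * y j)
       + t * (\<Sum>i\<in>W. \<Sum>j\<in>W. y i * M i j * x j) + t^2 * (\<Sum>i\<in>W. \<Sum>j\<in>W. y i * M i j * y j)"
      by (simp add: sum.distrib sum_distrib_left algebra_simps power2_eq_square)
    then show ?thesis using q B1 B2 Q_def by simp
  qed
  have ge: "2 * t * B + t^2 * Q \<ge> 0" for t
    using psd[unfolded psd_on_def, rule_format, of "\<lambda>i. x i + t * y i"] exp[of t] by simp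
  have Bnn: "B \<ge> 0" unfolding B_def by (intro sum_nonneg) simp
  have "B \<le> 0"
  proof (rule ccontr)
    assume "\<not> B \<le> 0"
    then have Bp: "B > 0" by simp
    define t where "t = - B / (Q + 1)"
    have "2 * t * B + t^2 * Q = t * (2 * B + t * Q)" by (simp add: algebra_simps power2_eq_square)
    moreover have "t < 0" using Bp Q0 by (simp add: t_def)
    moreover have "t * Q > - B"
    proof -
      have "t * Q = - B * (Q / (Q + 1))" using Q0 by (simp add: t_def)
      moreover have "Q / (Q + 1) < 1" using Q0 by simp
      moreover have "B * (Q / (Q + 1)) < B * 1" using \<open>Q / (Q + 1) < 1\<close> Bp by (rule mult_strict_left_mono)
      ultimately show ?thesis by simp
    qed
    moreover then have "2 * B + t * Q > 0" using Bp by simp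
    ultimately have "2 * t * B + t^2 * Q < 0" by (simp add: mult_neg_pos)
    then show False using ge[of t] by simp
  qed
  then have "B = 0" using Bnn by simp
  then have "\<forall>i\<in>W. y i * y i = 0" unfolding B_def using fin
    by (subst (asm) sum_nonneg_eq_0_iff) auto
  then show ?thesis unfolding y_def by simp
qed


lemma kernel_subspace: "subspace (kernel_on W M)"
  unfolding subspace_def kernel_on_def
  by (auto simp: sum.distrib algebra_simps sum_distrib_left[symmetric])

lemma stress_affine:
  assumes st: "is_stress_matrix W E p M" and x: "\<forall>j\<in>W. x j = a \<bullet> p j + c" and i: "i \<in> W"
  shows "(\<Sum>j\<in>W. M i j * x j) = 0"
proof -
  have "(\<Sum>j\<in>W. M i j * x j) = (\<Sum>j\<in>W. a \<bullet> (M i j *\<^sub>R p j) + M i j * c)"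
    using x by (intro sum.cong refl) (simp add: algebra_simps)
  also have "\<dots> = a \<bullet> (\<Sum>j\<in>W. M i j *\<^sub>R p j) + (\<Sum>j\<in>W. M i j) * c"
    by (simp add: sum.distrib inner_sum_right sum_distrib_right)
  also have "\<dots> = 0"
  proof -
    have "(\<Sum>j\<in>W. M i j *\<^sub>R p j) = 0" "(\<Sum>j\<in>W. M i j) = 0"
      using st i unfolding is_stress_matrix_def by blast+
    then show ?thesis by simp
  qed
  finally show ?thesis .
qed

lemma kernel_aff:
  fixes p :: "'v::finite \<Rightarrow> real^'d"
  assumes st: "is_stress_matrix W E p M" and nl: "nullity_on W M = CARD('d) + 1"
    and S: "S \<subseteq> W" "card S = CARD('d) + 1" "inj_on p S" "\<not> affine_dependent (p ` S)"
  shows "kernel_on W M = range (affmap W p)"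
proof -
  have sub: "range (affmap W p) \<subseteq> kernel_on W M"
  proof
    fix x assume "x \<in> range (affmap W p)"
    then obtain z where z: "x = affmap W p z" by auto
    have "(\<Sum>j\<in>W. M i j * x $ j) = 0" if "i \<in> W" for i
      using stress_affine[OF st _ that, of "\<lambda>j. x $ j" "fst z" "snd z"] z
      by (simp add: affmap_def)
    then show "x \<in> kernel_on W M" unfolding kernel_on_def using z by (simp add: affmap_def)
  qed
  show ?thesis
  proof (rule subspace_dim_equal[OF _ kernel_subspace sub, symmetric])
    show "subspace (range (affmap W p))"
      by (intro linear_subspace_image affmap_linear subspace_UNIV)
    show "dim (kernel_on W M) \<le> dim (range (affmap W p))"
      using dim_affmap[OF S] nl unfolding nullity_on_def by simp
  qed
qed


lemma row_ext:
  fixes f :: "'v \<Rightarrow> 'a::real_vector"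
  assumes fin: "finite V" and sub: "W \<subseteq> V"
  shows "(\<Sum>j\<in>V. extend_zero W M i j *\<^sub>R f j) = (if i \<in> W then (\<Sum>j\<in>W. M i j *\<^sub>R f j) else 0)"
proof (cases "i \<in> W")
  case True
  have "(\<Sum>j\<in>V. extend_zero W M i j *\<^sub>R f j) = (\<Sum>j\<in>V. if j \<in> W then M i j *\<^sub>R f j else 0)"
    using True by (intro sum.cong refl) (auto simp: extend_zero_def)
  also have "\<dots> = (\<Sum>j\<in>V \<inter> W. M i j *\<^sub>R f j)" by (simp add: sum.inter_restrict[OF fin])
  also have "V \<inter> W = W" using sub by auto
  finally show ?thesis using True by simp
qed (simp add: extend_zero_def)

lemma row_ext_real:
  fixes x :: "'v \<Rightarrow> real"
  assumes fin: "finite V" and sub: "W \<subseteq> V"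
  shows "(\<Sum>j\<in>V. extend_zero W M i j * x j) = (if i \<in> W then (\<Sum>j\<in>W. M i j * x j) else 0)"
  using row_ext[OF fin sub, of M i x] by simp

lemma quad_ext:
  fixes x :: "'v \<Rightarrow> real"
  assumes fin: "finite V" and sub: "W \<subseteq> V"
  shows "(\<Sum>i\<in>V. \<Sum>j\<in>V. x i * extend_zero W M i j * x j) = (\<Sum>i\<in>W. \<Sum>j\<in>W. x i * M i j * x j)"
proof -
  have "(\<Sum>i\<in>V. \<Sum>j\<in>V. x i * extend_zero W M i j * x j) = (\<Sum>i\<in>V. x i * (\<Sum>j\<in>V. extend_zero W M i j * x j))"
    by (simp add: sum_distrib_left mult.assoc)
  also have "\<dots> = (\<Sum>i\<in>V. if i \<in> W then x i * (\<Sum>j\<in>W. M i j * x j) else 0)"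
    by (intro sum.cong refl) (simp add: row_ext_real[OF fin sub])
  also have "\<dots> = (\<Sum>i\<in>V \<inter> W. x i * (\<Sum>j\<in>W. M i j * x j))" by (simp add: sum.inter_restrict[OF fin])
  also have "V \<inter> W = W" using sub by auto
  finally show ?thesis by (simp add: sum_distrib_left mult.assoc)
qed

lemma ext_sym:
  assumes "\<forall>i\<in>W. \<forall>j\<in>W. M i j = M j i"
  shows "extend_zero W M i j = extend_zero W M j i"
proof (cases "i \<in> W \<and> j \<in> W")
  case True
  then have "M i j = M j i" using assms by blast
  then show ?thesis unfolding extend_zero_def using True by simp
qed (auto simp: extend_zero_def)

lemma ext_zero:
  assumes "is_stress_matrix W E p M" "i \<noteq> j" "{i, j} \<notin> E"
  shows "extend_zero W M i j = 0"
proof (cases "i \<in> W \<and> j \<in> W")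
  case True
  then have "M i j = 0" using assms unfolding is_stress_matrix_def by blast
  then show ?thesis unfolding extend_zero_def using True by simp
qed (auto simp: extend_zero_def)

theorem theorem6:
  fixes VA VB :: "'v::finite set"
    and EA EB :: "'v set set"
    and pA pB :: "'v \<Rightarrow> real^'d"
    and \<Omega>A \<Omega>B :: "'v \<Rightarrow> 'v \<Rightarrow> real"
  assumes gA: "is_graph VA EA" and gB: "is_graph VB EB"
    and genA: "general_position VA pA" and genB: "general_position VB pB"
    and propA: "VA \<inter> VB \<subset> VA" and propB: "VA \<inter> VB \<subset> VB"
    and ncard: "card (VA \<inter> VB) \<ge> CARD('d) + 1"
    and agree: "\<forall>i\<in>VA \<inter> VB. pA i = pB i"
    and stA: "is_stress_matrix VA EA pA \<Omega>A" and psdA: "psd_on VA \<Omega>A"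
    and nA: "nullity_on VA \<Omega>A = CARD('d) + 1"
    and stB: "is_stress_matrix VB EB pB \<Omega>B" and psdB: "psd_on VB \<Omega>B"
    and nB: "nullity_on VB \<Omega>B = CARD('d) + 1"
  shows "let V = VA \<union> VB;
             p = (\<lambda>i. if i \<in> VA then pA i else pB i);
             \<Omega> = (\<lambda>i j. extend_zero VA \<Omega>A i j + extend_zero VB \<Omega>B i j)
         in is_stress_matrix V (EA \<union> EB) p \<Omega> \<and> psd_on V \<Omega> \<and>
            nullity_on V \<Omega> = CARD('d) + 1"
proof -
  define V where "V = VA \<union> VB"
  define P where "P = (\<lambda>i. if i \<in> VA then pA i else pB i)"
  define Om where "Om = (\<lambda>i j. extend_zero VA \<Omega>A i j + extend_zero VB \<Omega>B i j)"
  have finA: "finite VA" using gA unfolding is_graph_def by simp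
  have finB: "finite VB" using gB unfolding is_graph_def by simp
  have finV: "finite V" using finA finB by (simp add: V_def)
  have subA: "VA \<subseteq> V" and subB: "VB \<subseteq> V" by (auto simp: V_def)
  have row: "(\<Sum>j\<in>V. Om i j *\<^sub>R f j) = (if i \<in> VA then (\<Sum>j\<in>VA. \<Omega>A i j *\<^sub>R f j) else 0)
      + (if i \<in> VB then (\<Sum>j\<in>VB. \<Omega>B i j *\<^sub>R f j) else 0)" for i and f :: "'v \<Rightarrow> 'a::real_vector"
    unfolding Om_def by (simp add: scaleR_add_left sum.distrib row_ext[OF finV subA] row_ext[OF finV subB])
  have quad: "(\<Sum>i\<in>V. \<Sum>j\<in>V. x i * Om i j * x j) = (\<Sum>i\<in>VA. \<Sum>j\<in>VA. x i * \<Omega>A i j * x j)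
      + (\<Sum>i\<in>VB. \<Sum>j\<in>VB. x i * \<Omega>B i j * x j)" for x
  proof -
    have "(\<Sum>i\<in>V. \<Sum>j\<in>V. x i * Om i j * x j) = (\<Sum>i\<in>V. \<Sum>j\<in>V. x i * extend_zero VA \<Omega>A i j * x j)
      + (\<Sum>i\<in>V. \<Sum>j\<in>V. x i * extend_zero VB \<Omega>B i j * x j)"
      unfolding Om_def by (simp only: distrib_left distrib_right sum.distrib)
    then show ?thesis by (simp only: quad_ext[OF finV subA] quad_ext[OF finV subB])
  qed
  have PA: "\<And>j. j \<in> VA \<Longrightarrow> P j = pA j" and PB: "\<And>j. j \<in> VB \<Longrightarrow> P j = pB j"
    using agree by (auto simp: P_def)
  obtain S where S: "S \<subseteq> VA \<inter> VB" "card S = CARD('d) + 1" "finite S"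
    using obtain_subset_with_card_n[OF ncard] by blast
  have injA: "inj_on pA S" and depA: "\<not> affine_dependent (pA ` S)"
    using genA S unfolding general_position_def by auto
  have eqS1: "pB i = pA i" if "i \<in> S" for i
  proof -
    have "i \<in> VA \<inter> VB" using S that by blast
    then show ?thesis using agree by metis
  qed
  have eqS2: "P i = pA i" if "i \<in> S" for i
  proof -
    have "i \<in> VA" using S that by blast
    then show ?thesis unfolding P_def by simp
  qed
  note eqS = eqS1 eqS2
  have injB: "inj_on pB S" and depB: "\<not> affine_dependent (pB ` S)"
    using injA depA eqS by (auto simp: inj_on_def image_cong[OF refl eqS(1)])
  have injP: "inj_on P S" and depP: "\<not> affine_dependent (P ` S)"
    using injA depA eqS by (auto simp: inj_on_def image_cong[OF refl eqS(2)])
  have kA: "kernel_on VA \<Omega>A = range (affmap VA pA)"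
    using kernel_aff[OF stA nA _ S(2) injA depA] S by auto
  have kB: "kernel_on VB \<Omega>B = range (affmap VB pB)"
    using kernel_aff[OF stB nB _ S(2) injB depB] S by auto
  have symA: "\<forall>i\<in>VA. \<forall>j\<in>VA. \<Omega>A i j = \<Omega>A j i" and symB: "\<forall>i\<in>VB. \<forall>j\<in>VB. \<Omega>B i j = \<Omega>B j i"
    using stA stB unfolding is_stress_matrix_def by (meson, meson)
  have rsA: "\<And>i. i \<in> VA \<Longrightarrow> (\<Sum>j\<in>VA. \<Omega>A i j) = 0"
    and eqA: "\<And>i. i \<in> VA \<Longrightarrow> (\<Sum>j\<in>VA. \<Omega>A i j *\<^sub>R pA j) = 0"
    using stA unfolding is_stress_matrix_def by blast+
  have rsB: "\<And>i. i \<in> VB \<Longrightarrow> (\<Sum>j\<in>VB. \<Omega>B i j) = 0"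
    and eqB: "\<And>i. i \<in> VB \<Longrightarrow> (\<Sum>j\<in>VB. \<Omega>B i j *\<^sub>R pB j) = 0"
    using stB unfolding is_stress_matrix_def by blast+
  have stress: "is_stress_matrix V (EA \<union> EB) P Om"
    unfolding is_stress_matrix_def
  proof (intro conjI ballI impI)
    fix i j assume "i \<in> V" "j \<in> V"
    show "Om i j = Om j i" unfolding Om_def using ext_sym[OF symA, of i j] ext_sym[OF symB, of i j] by simp
  next
    fix i j assume "i \<in> V" "j \<in> V" "i \<noteq> j \<and> {i, j} \<notin> EA \<union> EB"
    then show "Om i j = 0" unfolding Om_def using ext_zero[OF stA, of i j] ext_zero[OF stB, of i j] by simp
  next
    fix i assume "i \<in> V"
    have "(\<Sum>j\<in>V. Om i j) = (\<Sum>j\<in>V. Om i j *\<^sub>R (1::real))" by simp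
    also have "\<dots> = 0" unfolding row using rsA rsB by simp
    finally show "(\<Sum>j\<in>V. Om i j) = 0" .
  next
    fix i assume "i \<in> V"
    have a: "(\<Sum>j\<in>VA. \<Omega>A i j *\<^sub>R P j) = (\<Sum>j\<in>VA. \<Omega>A i j *\<^sub>R pA j)"
      using PA by (intro sum.cong) auto
    have b: "(\<Sum>j\<in>VB. \<Omega>B i j *\<^sub>R P j) = (\<Sum>j\<in>VB. \<Omega>B i j *\<^sub>R pB j)"
      using PB by (intro sum.cong) auto
    show "(\<Sum>j\<in>V. Om i j *\<^sub>R P j) = 0" unfolding row a b using eqA eqB by simp
  qed
  have psd: "psd_on V Om"
    unfolding psd_on_def quad using psdA psdB unfolding psd_on_def by (simp add: add_nonneg_nonneg)
  have kern: "kernel_on V Om = range (affmap V P)"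
  proof
    show "range (affmap V P) \<subseteq> kernel_on V Om"
    proof
      fix x assume "x \<in> range (affmap V P)"
      then obtain z where z: "x = affmap V P z" by auto
      have xa: "\<forall>j\<in>VA. x $ j = fst z \<bullet> pA j + snd z" using z subA PA by (auto simp: affmap_def)
      have xb: "\<forall>j\<in>VB. x $ j = fst z \<bullet> pB j + snd z" using z subB PB by (auto simp: affmap_def)
      have "(\<Sum>j\<in>V. Om i j * x $ j) = 0" if "i \<in> V" for i
      proof -
        have "(\<Sum>j\<in>V. Om i j * x $ j) = (\<Sum>j\<in>V. Om i j *\<^sub>R x $ j)" by simp
        also have "\<dots> = 0" unfolding row
          using stress_affine[OF stA xa] stress_affine[OF stB xb] by simp
        finally show ?thesis .
      qed
      then show "x \<in> kernel_on V Om" unfolding kernel_on_def using z by (simp add: affmap_def)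
    qed
  next
    show "kernel_on V Om \<subseteq> range (affmap V P)"
    proof
      fix x assume xk: "x \<in> kernel_on V Om"
      have out: "\<And>i. i \<notin> V \<Longrightarrow> x $ i = 0" and kr: "\<And>i. i \<in> V \<Longrightarrow> (\<Sum>j\<in>V. Om i j * x $ j) = 0"
        using xk unfolding kernel_on_def by auto
      have q0: "(\<Sum>i\<in>V. \<Sum>j\<in>V. x $ i * Om i j * x $ j) = 0"
        using kr by (simp add: mult.assoc sum_distrib_left[symmetric])
      have qa: "(\<Sum>i\<in>VA. \<Sum>j\<in>VA. x $ i * \<Omega>A i j * x $ j) \<ge> 0"
        and qb: "(\<Sum>i\<in>VB. \<Sum>j\<in>VB. x $ i * \<Omega>B i j * x $ j) \<ge> 0"
        using psdA psdB unfolding psd_on_def by blast+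
      have qa0: "(\<Sum>i\<in>VA. \<Sum>j\<in>VA. x $ i * \<Omega>A i j * x $ j) = 0"
        and qb0: "(\<Sum>i\<in>VB. \<Sum>j\<in>VB. x $ i * \<Omega>B i j * x $ j) = 0"
        using q0 qa qb unfolding quad by linarith+
      have ra: "\<forall>i\<in>VA. (\<Sum>j\<in>VA. \<Omega>A i j * x $ j) = 0"
        by (rule psd_zero[OF finA symA psdA qa0])
      have rb: "\<forall>i\<in>VB. (\<Sum>j\<in>VB. \<Omega>B i j * x $ j) = 0"
        by (rule psd_zero[OF finB symB psdB qb0])
      have "(\<chi> i. if i \<in> VA then x $ i else 0) \<in> kernel_on VA \<Omega>A"
        unfolding kernel_on_def using ra by (auto cong: sum.cong)
      then obtain zA where zA: "(\<chi> i. if i \<in> VA then x $ i else 0) = affmap VA pA zA"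
        using kA by auto
      have xA: "\<forall>i\<in>VA. x $ i = fst zA \<bullet> pA i + snd zA"
      proof
        fix i assume "i \<in> VA"
        then show "x $ i = fst zA \<bullet> pA i + snd zA"
          using arg_cong[OF zA, of "\<lambda>v. v $ i"] by (simp add: affmap_def)
      qed
      have "(\<chi> i. if i \<in> VB then x $ i else 0) \<in> kernel_on VB \<Omega>B"
        unfolding kernel_on_def using rb by (auto cong: sum.cong)
      then obtain zB where zB: "(\<chi> i. if i \<in> VB then x $ i else 0) = affmap VB pB zB"
        using kB by auto
      have xB: "\<forall>i\<in>VB. x $ i = fst zB \<bullet> pB i + snd zB"
      proof
        fix i assume "i \<in> VB"
        then show "x $ i = fst zB \<bullet> pB i + snd zB"
          using arg_cong[OF zB, of "\<lambda>v. v $ i"] by (simp add: affmap_def)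
      qed
      have "\<forall>i\<in>S. (fst zA - fst zB) \<bullet> pA i + (snd zA - snd zB) = 0"
      proof
        fix i assume iS: "i \<in> S"
        then have "i \<in> VA" "i \<in> VB" using S by blast+
        then have "fst zA \<bullet> pA i + snd zA = fst zB \<bullet> pB i + snd zB" using xA xB by metis
        then show "(fst zA - fst zB) \<bullet> pA i + (snd zA - snd zB) = 0"
          using eqS1[OF iS] by (simp add: inner_diff_left)
      qed
      then have "fst zA - fst zB = 0 \<and> snd zA - snd zB = 0"
        by (rule key_zero[OF S(2) injA depA])
      then have eqz: "fst zA = fst zB" "snd zA = snd zB" by auto
      have "x = affmap V P zA"
        unfolding vec_eq_iff affmap_def
        using xA xB out PA PB eqz by (auto simp: V_def)
      then show "x \<in> range (affmap V P)" by auto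
    qed
  qed
  have null: "nullity_on V Om = CARD('d) + 1"
    unfolding nullity_on_def kern
  proof -
    have "S \<subseteq> V" using S by (auto simp: V_def)
    then show "dim (range (affmap V P)) = CARD('d) + 1" by (rule dim_affmap[OF _ S(2) injP depP])
  qed
  show ?thesis unfolding Let_def V_def[symmetric] P_def[symmetric] Om_def[symmetric]
    using stress psd null by blast
qed

end
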